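(* Let $w,u$ be integers with $w/2 \le u < w$, fix a sign, and let $q = 2^w - 2^u \pm 1$. Let $\lambda$ be a positive integer multiple of $q$, and let $b = \lambda/q$. Define $c = \lfloor \lambda/2^w \rfloor$ and, for integers $x$, $$v(x) = \left\lfloor -\frac{x(2^u \mp 1)}{2^w} \right\rfloor, \qquad f(x) = x + v(x),$$ where $\mp$ is the sign opposite to the one in $q$, so that $q = 2^w - (2^u \mp 1)$. Let $b_0 = c$ and $b_{i+1} = b_i + (c - f(b_i))$. Let $N$ be the least index with $f(b_N) = c$. Then $b_i \le b$ for every $0 \le i \le N$.
   Context: The sequence $b_0, b_1, \dots, b_N$ consists of the values produced by the loop of a division algorithm. The loop starts at $b_0 = c$, repeats the update $b_{i+1} = b_i + (c - f(b_i))$ while $f(b_i) \ne c$, and stops at the first index $N$ with $f(b_N) = c$. *)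

theory Defs
  imports Complex_Main
begin

text \<open>Sign s is +1 or -1; q = 2^w - 2^u + s, and v(x) = floor(-x(2^u - s)/2^w).\<close>

definition vfun :: "nat \<Rightarrow> nat \<Rightarrow> int \<Rightarrow> int \<Rightarrow> int" where
  "vfun w u s x = \<lfloor> - (real_of_int x * (2 ^ u - real_of_int s)) / 2 ^ w \<rfloor>"

definition ffun :: "nat \<Rightarrow> nat \<Rightarrow> int \<Rightarrow> int \<Rightarrow> int" where
  "ffun w u s x = x + vfun w u s x"

primrec bseq :: "nat \<Rightarrow> nat \<Rightarrow> int \<Rightarrow> int \<Rightarrow> nat \<Rightarrow> int" where
  "bseq w u s c 0 = c"
| "bseq w u s c (Suc i) = bseq w u s c i + (c - ffun w u s (bseq w u s c i))"

end

theory Submission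
  imports Defs
begin

lemma ffun_eq:
  assumes "q = 2 ^ w - 2 ^ u + s"
  shows "ffun w u s x = \<lfloor>real_of_int x * real_of_int q / 2 ^ w\<rfloor>"
proof -
  have rq: "real_of_int q = 2 ^ w - 2 ^ u + real_of_int s" using assms by simp
  have "real_of_int x * real_of_int q / 2 ^ w
      = real_of_int x + (- (real_of_int x * (2 ^ u - real_of_int s)) / 2 ^ w)"
    unfolding rq by (simp add: field_simps)
  have "x + vfun w u s x = \<lfloor>- (real_of_int x * (2 ^ u - real_of_int s)) / 2 ^ w + real_of_int x\<rfloor>"
    unfolding vfun_def using floor_add_int[of "- (real_of_int x * (2 ^ u - real_of_int s)) / 2 ^ w" x]
    by (simp only: add.commute)
  also have "\<dots> = \<lfloor>real_of_int x * real_of_int q / 2 ^ w\<rfloor>"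
    using \<open>real_of_int x * real_of_int q / 2 ^ w = _\<close> by (simp only: add.commute)
  finally show ?thesis unfolding ffun_def .
qed

lemma step_le:
  fixes x b :: int and W q :: real
  assumes "x \<le> b" "0 < q" "q < W"
  shows "x + (\<lfloor>real_of_int b * q / W\<rfloor> - \<lfloor>real_of_int x * q / W\<rfloor>) \<le> b"
proof -
  have W: "W > 0" using assms by simp
  have a: "real_of_int \<lfloor>real_of_int b * q / W\<rfloor> \<le> real_of_int b * q / W" by simp
  have bb: "real_of_int x * q / W - 1 < real_of_int \<lfloor>real_of_int x * q / W\<rfloor>" by linarith
  have "(real_of_int b - real_of_int x) * q \<le> (real_of_int b - real_of_int x) * W"
    using assms by (intro mult_left_mono) auto
  then have cc: "(real_of_int b - real_of_int x) * q / W \<le> real_of_int b - real_of_int x"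
    using W by (simp add: divide_le_eq)
  have dd: "(real_of_int b - real_of_int x) * q / W = real_of_int b * q / W - real_of_int x * q / W"
    by (simp add: left_diff_distrib diff_divide_distrib)
  have "real_of_int (\<lfloor>real_of_int b * q / W\<rfloor> - \<lfloor>real_of_int x * q / W\<rfloor>)
      < real_of_int b - real_of_int x + 1"
    using a bb cc dd unfolding of_int_diff by linarith
  then show ?thesis by linarith
qed

theorem theorem2:
  fixes w u N :: nat and s q lam b c :: int
  assumes "real w / 2 \<le> real u" and "u < w"
    and "s = 1 \<or> s = -1"
    and "q = 2 ^ w - 2 ^ u + s"
    and "lam > 0" and "q dvd lam"
    and "b = lam div q"
    and "c = \<lfloor> real_of_int lam / 2 ^ w \<rfloor>"
    and "ffun w u s (bseq w u s c N) = c"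
    and "\<forall>i<N. ffun w u s (bseq w u s c i) \<noteq> c"
  shows "\<forall>i\<le>N. bseq w u s c i \<le> b"
proof -
  have u1: "u \<ge> 1" using assms(1,2) by (cases u) auto
  have h1: "(2::int) ^ Suc u \<le> 2 ^ w" using assms(2)
    by (intro power_increasing) auto
  have h2: "(2::int) ^ u \<ge> 2 ^ 1" using u1
    by (intro power_increasing) auto
  have h1': "2 * (2::int) ^ u \<le> 2 ^ w" using h1 by simp
  have sb: "-1 \<le> s" "s \<le> 1" using assms(3) by auto
  have h2': "(2::int) \<le> 2 ^ u" using h2 by simp
  have qb1: "0 < q" using sb h1' h2' unfolding assms(4) by linarith
  have qb2: "q < 2 ^ w" using sb h1' h2' unfolding assms(4) by linarith
  note qb = qb1 qb2
  have "real_of_int q < real_of_int ((2::int) ^ w)" using qb2 by (simp only: of_int_less_iff)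
  then have qpos2: "real_of_int q < 2 ^ w" by (simp only: of_int_power of_int_numeral)
  have qpos1: "0 < real_of_int q" using qb1 by (simp only: of_int_pos)
  note qpos = qpos1 qpos2
  have lam: "lam = b * q" using assms(6,7) by simp
  have c: "c = \<lfloor>real_of_int b * real_of_int q / 2 ^ w\<rfloor>"
    unfolding assms(8) lam of_int_mult by (rule refl)
  have "bseq w u s c i \<le> b" for i
  proof (induction i)
    case 0
    have "0 \<le> b" using assms(5) qb1 unfolding lam
      by (auto simp: zero_less_mult_iff)
    have "real_of_int b * real_of_int q \<le> real_of_int b * 2 ^ w"
      using \<open>0 \<le> b\<close> qpos by (intro mult_left_mono) auto
    then have "real_of_int b * real_of_int q / 2 ^ w \<le> real_of_int b"
      by (simp add: divide_le_eq)
    then have "\<lfloor>real_of_int b * real_of_int q / 2 ^ w\<rfloor> \<le> \<lfloor>real_of_int b\<rfloor>"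
      by (rule floor_mono)
    then show ?case by (simp only: bseq.simps floor_of_int c[symmetric])
  next
    case (Suc i)
    have "bseq w u s c i + (c - ffun w u s (bseq w u s c i)) \<le> b"
      using step_le[OF Suc qpos] unfolding ffun_eq[OF assms(4)] c[symmetric] .
    then show ?case by (simp only: bseq.simps(2))
  qed
  then show ?thesis by blast
qed

end
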